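(* Let $q>0$ and $\ell\in\{0,1,2,\ldots\}$. Then $$\tilde\gamma_\ell(q)=\lim_{\alpha\to\infty}\sum_{n=0}^{\alpha}(-1)^n\frac{\log^\ell(n+q)}{n+q},$$ where $\alpha$ runs through the nonnegative integers.
   Context: For $q>0$, $\zeta_E(z,q)=\sum_{n=0}^\infty (-1)^n (n+q)^{-z}$ for $\mathrm{Re}(z)>0$, extended by analytic continuation to an entire function of $z$. The modified Stieltjes constants $\tilde\gamma_k(q)$ are defined by the Taylor expansion $\zeta_E(z,q)=\sum_{k=0}^\infty\frac{(-1)^k\tilde\gamma_k(q)}{k!}(z-1)^k$. Convention: $\log^0 x=1$. *)

theory Defs
  imports "HOL-Complex_Analysis.Complex_Analysis"
begin

text \<open>The alternating Hurwitz zeta function zeta_E(z,q): the entire function of z that agrees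
  with the series sum_n (-1)^n (n+q)^(-z) on the half-plane Re z > 0.
  (By the identity theorem such a function is unique when it exists.)\<close>
definition zetaE :: "complex \<Rightarrow> real \<Rightarrow> complex" where
  "zetaE z q = (THE f. f holomorphic_on UNIV \<and>
      (\<forall>w. 0 < Re w \<longrightarrow> f w = (\<Sum>n. (-1) ^ n * (complex_of_real (real n + q)) powr (- w)))) z"

text \<open>Modified Stieltjes constants: zeta_E(z,q) = sum_k (-1)^k g_k(q)/k! (z-1)^k, i.e.
  the k-th Taylor coefficient at z = 1 equals (-1)^k g_k(q) / k!, so
  g_k(q) = (-1)^k * (k-th derivative of zeta_E(.,q) at 1).\<close>
definition tilde_gamma :: "nat \<Rightarrow> real \<Rightarrow> complex" where
  "tilde_gamma k q = (-1) ^ k * (deriv ^^ k) (\<lambda>z. zetaE z q) 1"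

end

theory Submission
  imports Defs
begin


fun fd :: "nat \<Rightarrow> (real \<Rightarrow> complex) \<Rightarrow> real \<Rightarrow> complex" where
  "fd 0 f = f"
| "fd (Suc K) f = fd K (\<lambda>t. f t - f (t + 1))"

lemma fd_shift: "fd K (\<lambda>t. f t - f (t + 1)) x = fd K f x - fd K f (x + 1)"
proof (induction K arbitrary: f x)
  case 0 then show ?case by simp
next
  case (Suc K)
  show ?case using Suc[of "\<lambda>t. f t - f (t + 1)"] by simp
qed

lemma fd_Suc': "fd (Suc K) f x = fd K f x - fd K f (x + 1)"
  using fd_shift by simp

lemma fd_holo:
  assumes "\<And>t. (\<lambda>z. h t z) holomorphic_on S"
  shows "(\<lambda>z. fd K (\<lambda>t. h t z) x) holomorphic_on S"
  using assms
proof (induction K arbitrary: h x)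
  case 0 then show ?case by simp
next
  case (Suc K)
  have "(\<lambda>z. fd K (\<lambda>t. h t z - h (t+1) z) x) holomorphic_on S"
    by (rule Suc.IH) (intro holomorphic_intros Suc.prems)
  then show ?case by simp
qed



lemma fd_bound:
  assumes der: "\<And>j t. t > 0 \<Longrightarrow> (fs j has_vector_derivative fs (Suc j) t) (at t)"
  and x: "x > 0" and B: "\<And>t. x \<le> t \<Longrightarrow> t \<le> x + real K \<Longrightarrow> norm (fs K t) \<le> B"
  shows "norm (fd K (fs 0) x) \<le> B"
  using der B
proof (induction K arbitrary: fs)
  case 0
  then show ?case using x by simp
next
  case (Suc K)
  define gs where "gs = (\<lambda>j t. fs j t - fs j (t + 1))"
  have derg: "(gs j has_vector_derivative gs (Suc j) t) (at t)" if "t > 0" for j t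
  proof -
    have d1: "(fs j has_vector_derivative fs (Suc j) (t+1)) (at ((\<lambda>t. t + 1) t))"
      using Suc.prems(1)[of "t+1" j] that by simp
    have d0: "((\<lambda>t. t + 1) has_vector_derivative 1) (at t)"
      by (auto intro!: derivative_eq_intros)
    have "((fs j \<circ> (\<lambda>t. t + 1)) has_vector_derivative (1 *\<^sub>R fs (Suc j) (t+1))) (at t)"
      by (rule vector_diff_chain_at[OF d0 d1])
    then have "((\<lambda>t. fs j (t + 1)) has_vector_derivative fs (Suc j) (t+1)) (at t)"
      by (simp add: o_def)
    then show ?thesis unfolding gs_def
      by (intro has_vector_derivative_diff Suc.prems(1) that)
  qed
  have Bg: "norm (gs K t) \<le> B" if "x \<le> t" "t \<le> x + real K" for t
  proof -
    have "\<exists>s\<in>{t<..<t+1}. norm (fs K (t+1) - fs K t) \<le> norm ((\<lambda>h. h *\<^sub>R fs (Suc K) s) (t + 1 - t))"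
    proof (rule mvt_general)
      show "continuous_on {t..t+1} (fs K)"
      proof (intro continuous_at_imp_continuous_on ballI)
        fix s assume "s \<in> {t..t+1}"
        then have "s > 0" using x that by auto
        then show "isCont (fs K) s"
          using Suc.prems(1) has_vector_derivative_continuous by blast
      qed
      show "(fs K has_derivative (\<lambda>h. h *\<^sub>R fs (Suc K) s)) (at s)" if "t < s" "s < t+1" for s
        using Suc.prems(1)[of s K] that x \<open>x \<le> t\<close> by (simp add: has_vector_derivative_def)
    qed simp
    then obtain s where s: "t < s" "s < t+1" "norm (fs K (t+1) - fs K t) \<le> norm (fs (Suc K) s)"
      by auto
    have "norm (fs (Suc K) s) \<le> B"
      using Suc.prems(2)[of s] s that by simp
    then show ?thesis using s unfolding gs_def by (simp add: norm_minus_commute)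
  qed
  have "norm (fd K (gs 0) x) \<le> B"
    by (rule Suc.IH) (use derg Bg in auto)
  then show ?case by (simp add: gs_def)
qed



definition pw :: "complex \<Rightarrow> real \<Rightarrow> complex" where
  "pw z t = complex_of_real t powr (- z)"

definition fsz :: "complex \<Rightarrow> nat \<Rightarrow> real \<Rightarrow> complex" where
  "fsz z j t = (\<Prod>i<j. (- z - of_nat i)) * complex_of_real t powr (- z - of_nat j)"

lemma fsz_der:
  assumes "t > 0"
  shows "(fsz z j has_vector_derivative fsz z (Suc j) t) (at t)"
proof -
  let ?c = "(\<Prod>i<j. (- z - of_nat i))"
  let ?s = "- z - of_nat j"
  have "((\<lambda>w. w powr ?s) has_field_derivative (?s * (of_real t) powr (?s - 1))) (at (of_real t))"
    by (rule has_field_derivative_powr) (use assms in simp)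
  then have "((\<lambda>w. ?c * w powr ?s) has_field_derivative (?c * (?s * (of_real t) powr (?s - 1)))) (at (of_real t))"
    by (rule DERIV_cmult)
  then have "((\<lambda>x. ?c * (of_real x) powr ?s) has_vector_derivative (?c * (?s * (of_real t) powr (?s - 1)))) (at t)"
    by (rule has_vector_derivative_real_field)
  moreover have "?c * (?s * (of_real t) powr (?s - 1)) = fsz z (Suc j) t"
    by (simp add: fsz_def algebra_simps)
  ultimately show ?thesis unfolding fsz_def by simp
qed

lemma fsz_0: "fsz z 0 = pw z"
  by (auto simp: fsz_def pw_def)

lemma norm_fsz:
  assumes "t > 0" "x > 0" "x \<le> t" "Re z + real K \<ge> 0"
  shows "norm (fsz z K t) \<le> (\<Prod>i<K. (norm z + real i)) * x powr (- Re z - real K)"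
proof -
  have "norm (fsz z K t) = (\<Prod>i<K. norm (- z - of_nat i)) * t powr (- Re z - real K)"
    using assms by (simp add: fsz_def norm_mult prod_norm norm_powr_real_powr)
  also have "\<dots> \<le> (\<Prod>i<K. (norm z + real i)) * x powr (- Re z - real K)"
  proof (rule mult_mono)
    show "(\<Prod>i<K. norm (- z - of_nat i)) \<le> (\<Prod>i<K. (norm z + real i))"
    proof (rule prod_mono)
      fix i assume "i \<in> {..<K}"
      have "norm (- z - of_nat i) \<le> norm (-z) + norm (of_nat i :: complex)"
        by (rule norm_triangle_ineq4)
      then show "0 \<le> norm (- z - of_nat i) \<and> norm (- z - of_nat i) \<le> norm z + real i"
        by simp
    qed
    show "t powr (- Re z - real K) \<le> x powr (- Re z - real K)"
      by (rule powr_mono2') (use assms in auto)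
  qed (auto intro: prod_nonneg)
  finally show ?thesis .
qed

lemma pw_fd_bound:
  assumes "x > 0" "Re z + real K \<ge> 0"
  shows "norm (fd K (pw z) x) \<le> (\<Prod>i<K. (norm z + real i)) * x powr (- Re z - real K)"
proof -
  have "norm (fd K (fsz z 0) x) \<le> (\<Prod>i<K. (norm z + real i)) * x powr (- Re z - real K)"
    by (rule fd_bound[of "fsz z", OF fsz_der \<open>x > 0\<close>]) (use assms in \<open>auto intro!: norm_fsz\<close>)
  then show ?thesis by (simp add: fsz_0)
qed

lemma pw_holo: "(\<lambda>z. pw z t) holomorphic_on S"
proof (cases "t = 0")
  case True then show ?thesis by (simp add: pw_def)
next
  case False
  have "(\<lambda>z. exp ((- z) * ln (complex_of_real t))) holomorphic_on S"
    by (intro holomorphic_intros)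
  then show ?thesis using False by (simp add: pw_def powr_def)
qed

lemma fd_pw_holo: "(\<lambda>z. fd K (pw z) x) holomorphic_on S"
  using fd_holo[of "\<lambda>t z. pw z t" S K x] pw_holo by simp



declare fd.simps(2)[simp del]

lemma onestep_fin2:
  fixes g :: "nat \<Rightarrow> complex"
  shows "2 * (\<Sum>n<N. (-1)^n * g n) = g 0 + (\<Sum>n<N. (-1)^n * (g n - g (Suc n))) - (-1)^N * g N"
proof (induction N)
  case 0 then show ?case by simp
next
  case (Suc N)
  have "2 * (\<Sum>n<Suc N. (-1)^n * g n) = 2 * (\<Sum>n<N. (-1)^n * g n) + 2 * ((-1)^N * g N)"
    by (simp add: distrib_left)
  also have "\<dots> = g 0 + (\<Sum>n<N. (-1)^n * (g n - g (Suc n))) + (-1)^N * g N"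
    using Suc by simp
  also have "\<dots> = g 0 + (\<Sum>n<Suc N. (-1)^n * (g n - g (Suc n))) - (-1)^(Suc N) * g (Suc N)"
    by (simp add: algebra_simps)
  finally show ?case .
qed

lemma onestep_fin:
  fixes g :: "nat \<Rightarrow> complex"
  shows "(\<Sum>n<N. (-1)^n * g n) = g 0 / 2 + (\<Sum>n<N. (-1)^n * (g n - g (Suc n))) / 2 - (-1)^N * g N / 2"
proof -
  have "(\<Sum>n<N. (-1)^n * g n) = (2 * (\<Sum>n<N. (-1)^n * g n)) / 2" by simp
  also have "\<dots> = (g 0 + (\<Sum>n<N. (-1)^n * (g n - g (Suc n))) - (-1)^N * g N) / 2"
    by (simp only: onestep_fin2)
  finally show ?thesis by (simp add: diff_divide_distrib add_divide_distrib)
qed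

lemma onestep_sums:
  fixes g :: "nat \<Rightarrow> complex"
  assumes "g \<longlonglongrightarrow> 0" "summable (\<lambda>n. (-1)^n * (g n - g (Suc n)))"
  shows "(\<lambda>n. (-1)^n * g n) sums (g 0 / 2 + (\<Sum>n. (-1)^n * (g n - g (Suc n))) / 2)"
proof -
  have lim1: "(\<lambda>N. \<Sum>n<N. (-1)^n * (g n - g (Suc n))) \<longlonglongrightarrow> (\<Sum>n. (-1)^n * (g n - g (Suc n)))"
    using assms(2) summable_LIMSEQ by blast
  have a: "(\<lambda>N. norm (g N) / 2) \<longlonglongrightarrow> 0"
    using tendsto_divide_zero[OF tendsto_norm_zero[OF assms(1)], of 2] .
  have b: "norm ((-1)^N * g N / 2) = norm (g N) / 2" for N
    by (simp add: norm_mult norm_divide norm_power)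
  have "(\<lambda>N. norm ((-1)^N * g N / 2)) \<longlonglongrightarrow> 0"
    unfolding b by (rule a)
  then have lim2: "(\<lambda>N. (-1)^N * g N / 2) \<longlonglongrightarrow> 0"
    by (rule tendsto_norm_zero_cancel)
  have "(\<lambda>N. g 0 / 2 + (\<Sum>n<N. (-1)^n * (g n - g (Suc n))) / 2 - (-1)^N * g N / 2)
        \<longlonglongrightarrow> g 0 / 2 + (\<Sum>n. (-1)^n * (g n - g (Suc n))) / 2 - 0"
    by (rule tendsto_diff[OF tendsto_add[OF tendsto_const tendsto_divide[OF lim1 tendsto_const]] lim2]) simp
  then show ?thesis unfolding sums_def by (subst onestep_fin[of g]) simp
qed

lemma pq_at_top: "filterlim (\<lambda>n. real n + q) at_top sequentially"
  using filterlim_tendsto_add_at_top[OF tendsto_const filterlim_real_sequentially, of q]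
  by (simp add: add.commute)

lemma pq_tendsto: "s > 0 \<Longrightarrow> (\<lambda>n. (real n + q) powr (-s)) \<longlonglongrightarrow> 0"
  by (rule tendsto_neg_powr[OF _ pq_at_top]) simp

lemma pq_summable:
  assumes "s > 1" "q > 0"
  shows "summable (\<lambda>n. (real n + q) powr (-s))"
proof (rule summable_comparison_test_ev)
  show "summable (\<lambda>n. real n powr (-s))"
    using assms by (simp add: summable_real_powr_iff)
  show "\<forall>\<^sub>F n in sequentially. norm ((real n + q) powr (-s)) \<le> real n powr (-s)"
    using eventually_gt_at_top[of "0::nat"]
    by eventually_elim (use assms in \<open>auto intro!: powr_mono2'\<close>)
qed

lemma fd_tendsto:
  assumes "q > 0" "Re z + real K > 0"
  shows "(\<lambda>n. fd K (pw z) (real n + q)) \<longlonglongrightarrow> 0"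
proof (rule Lim_null_comparison)
  let ?C = "(\<Prod>i<K. (norm z + real i))"
  show "\<forall>\<^sub>F n in sequentially. norm (fd K (pw z) (real n + q)) \<le> ?C * (real n + q) powr (- (Re z + real K))"
  proof (intro always_eventually allI)
    fix n
    have "norm (fd K (pw z) (real n + q)) \<le> ?C * (real n + q) powr (- Re z - real K)"
      using assms by (intro pw_fd_bound) auto
    then show "norm (fd K (pw z) (real n + q)) \<le> ?C * (real n + q) powr (- (Re z + real K))"
      by (simp add: algebra_simps)
  qed
  show "(\<lambda>n. ?C * (real n + q) powr (- (Re z + real K))) \<longlonglongrightarrow> 0"
    using pq_tendsto[of "Re z + real K" q] assms tendsto_mult_right_zero by blast
qed

lemma fd_summable:
  assumes "q > 0" "Re z + real K > 1"
  shows "summable (\<lambda>n. norm (fd K (pw z) (real n + q)))"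
proof (rule summable_comparison_test')
  let ?C = "(\<Prod>i<K. (norm z + real i))"
  show "summable (\<lambda>n. ?C * (real n + q) powr (- (Re z + real K)))"
    using pq_summable[of "Re z + real K" q] assms by (intro summable_mult) auto
  show "norm (norm (fd K (pw z) (real n + q))) \<le> ?C * (real n + q) powr (- (Re z + real K))" for n
  proof -
    have "norm (fd K (pw z) (real n + q)) \<le> ?C * (real n + q) powr (- Re z - real K)"
      using assms by (intro pw_fd_bound) auto
    then show ?thesis by (simp add: algebra_simps)
  qed
qed

definition E :: "real \<Rightarrow> nat \<Rightarrow> complex \<Rightarrow> complex" where
  "E q K z = (\<Sum>j<K. fd j (pw z) q / 2 ^ Suc j) + (\<Sum>n. (-1)^n * fd K (pw z) (real n + q)) / 2 ^ K"

lemma fd_pw_diff: "fd K (pw z) (real n + q) - fd K (pw z) (real (Suc n) + q) = fd (Suc K) (pw z) (real n + q)"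
  using fd_Suc'[of K "pw z" "real n + q"] by (simp add: add_ac)

lemma E_step:
  assumes "q > 0" "Re z > 1 - real K"
  shows "E q K z = E q (Suc K) z"
proof -
  define g where "g n = fd K (pw z) (real n + q)" for n
  have g0: "g \<longlonglongrightarrow> 0" unfolding g_def using assms by (intro fd_tendsto) auto
  have gd: "(\<lambda>n. (-1)^n * (g n - g (Suc n))) = (\<lambda>n. (-1)^n * fd (Suc K) (pw z) (real n + q))"
    unfolding g_def fd_pw_diff ..
  have sm: "summable (\<lambda>n. (-1)^n * fd (Suc K) (pw z) (real n + q))"
    by (rule summable_norm_cancel)
       (use fd_summable[of q z "Suc K"] assms in \<open>simp add: norm_mult norm_power\<close>)
  have "(\<lambda>n. (-1)^n * g n) sums (g 0 / 2 + (\<Sum>n. (-1)^n * fd (Suc K) (pw z) (real n + q)) / 2)"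
    using onestep_sums[OF g0] gd sm by simp
  then have "(\<Sum>n. (-1)^n * fd K (pw z) (real n + q)) = fd K (pw z) q / 2 + (\<Sum>n. (-1)^n * fd (Suc K) (pw z) (real n + q)) / 2"
    unfolding g_def by (simp add: sums_iff)
  then have "E q K z = (\<Sum>j<K. fd j (pw z) q / 2 ^ Suc j) + (fd K (pw z) q / 2 + (\<Sum>n. (-1)^n * fd (Suc K) (pw z) (real n + q)) / 2) / 2 ^ K"
    unfolding E_def by simp
  also have "\<dots> = E q (Suc K) z"
    unfolding E_def by (simp add: field_simps)
  finally show ?thesis .
qed

lemma series_E1:
  assumes "q > 0" "Re z > 0"
  shows "(\<lambda>n. (-1)^n * pw z (real n + q)) sums E q 1 z"
proof -
  define g where "g n = pw z (real n + q)" for n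
  have g0: "g \<longlonglongrightarrow> 0" unfolding g_def using assms fd_tendsto[of q z 0] by simp
  have gd: "(\<lambda>n. (-1)^n * (g n - g (Suc n))) = (\<lambda>n. (-1)^n * fd 1 (pw z) (real n + q))"
    unfolding g_def using fd_pw_diff[of 0 z] by simp
  have sm: "summable (\<lambda>n. (-1)^n * fd 1 (pw z) (real n + q))"
    by (rule summable_norm_cancel)
       (use fd_summable[of q z 1] assms in \<open>simp add: norm_mult norm_power\<close>)
  show ?thesis
    using onestep_sums[OF g0] gd sm unfolding g_def E_def by simp
qed



lemma E_holo:
  assumes q: "q > 0"
  shows "E q K holomorphic_on {z. 1 - real K < Re z}"
proof -
  define H where "H = {z. 1 - real K < Re z}"
  have oH: "open H" unfolding H_def by (rule open_halfspace_Re_gt)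
  define f where "f n z = (-1)^n * fd K (pw z) (real n + q)" for n z
  have fholo: "f n holomorphic_on UNIV" for n
    unfolding f_def by (intro holomorphic_intros fd_pw_holo)
  have hfd: "(f n has_field_derivative deriv (f n) x) (at x)" for n x
    by (rule holomorphic_derivI[OF fholo]) auto
  have to_g: "\<exists>d h. 0 < d \<and> summable h \<and> (\<forall>\<^sub>F n in sequentially. \<forall>y\<in>ball x d \<inter> H. norm (f n y) \<le> h n)"
    if "x \<in> H" for x
  proof -
    define d where "d = (Re x - (1 - real K)) / 2"
    have d: "d > 0" using that unfolding d_def H_def by auto
    define C where "C = (\<Prod>i<K. (norm x + d + real i))"
    define h where "h n = C * (real n + q) powr (- (1 + d))" for n
    have sh: "summable h" unfolding h_def
      by (intro summable_mult pq_summable) (use d q in auto)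
    have "\<forall>\<^sub>F n in sequentially. \<forall>y\<in>ball x d \<inter> H. norm (f n y) \<le> h n"
      using eventually_gt_at_top[of "0::nat"]
    proof eventually_elim
      case (elim n)
      show ?case
      proof
        fix y assume y: "y \<in> ball x d \<inter> H"
        have ny: "norm y \<le> norm x + d"
          using y norm_triangle_ineq2[of y x] by (auto simp: dist_norm norm_minus_commute)
        have c1: "Re x - Re y \<le> norm (x - y)" using complex_Re_le_cmod[of "x - y"] by simp
        have c2: "norm (x - y) < d" using y by (simp add: dist_norm)
        have c3: "Re x = 2 * d + 1 - real K" using d_def by simp
        have ry: "Re y + real K \<ge> 1 + d"
          using c1 c2 c3 by argo
        have "norm (f n y) = norm (fd K (pw y) (real n + q))"
          by (simp add: f_def norm_mult norm_power)
        also have "\<dots> \<le> (\<Prod>i<K. (norm y + real i)) * (real n + q) powr (- Re y - real K)"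
          by (rule pw_fd_bound) (use q ry d in auto)
        also have "\<dots> \<le> h n" unfolding h_def C_def
        proof (rule mult_mono)
          show "(\<Prod>i<K. norm y + real i) \<le> (\<Prod>i<K. norm x + d + real i)"
            by (rule prod_mono) (use ny in auto)
          show "(real n + q) powr (- Re y - real K) \<le> (real n + q) powr (- (1 + d))"
            by (rule powr_mono) (use ry elim q in auto)
        qed (use d in \<open>auto intro!: prod_nonneg\<close>)
        finally show "norm (f n y) \<le> h n" .
      qed
    qed
    then show ?thesis using d sh by blast
  qed
  obtain g g' where gg: "\<forall>x \<in> H. ((\<lambda>n. f n x) sums g x) \<and> ((\<lambda>n. deriv (f n) x) sums g' x) \<and> (g has_field_derivative g' x) (at x)"
    using series_and_derivative_comparison_local[OF oH hfd to_g] by blast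
  have gholo: "g holomorphic_on H"
    using gg oH by (auto simp: holomorphic_on_open)
  have h1: "(\<lambda>z. \<Sum>j<K. fd j (pw z) q / 2 ^ Suc j) holomorphic_on H"
    by (rule holomorphic_on_sum, rule holomorphic_on_divide[OF fd_pw_holo holomorphic_on_const]) simp
  have h2: "(\<lambda>z. g z / 2 ^ K) holomorphic_on H"
    by (rule holomorphic_on_divide[OF gholo holomorphic_on_const]) simp
  have h3: "(\<lambda>z. (\<Sum>j<K. fd j (pw z) q / 2 ^ Suc j) + g z / 2 ^ K) holomorphic_on H"
    by (rule holomorphic_on_add[OF h1 h2])
  have eq: "(\<Sum>j<K. fd j (pw z) q / 2 ^ Suc j) + g z / 2 ^ K = E q K z" if "z \<in> H" for z
  proof -
    have "(\<Sum>n. f n z) = g z" using gg that by (simp add: sums_iff)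
    then show ?thesis unfolding E_def f_def by simp
  qed
  have "E q K holomorphic_on H"
    by (rule holomorphic_transform[OF h3 eq])
  then show ?thesis unfolding H_def .
qed


lemma E_eq_le:
  assumes "q > 0" "Re z > 1 - real K" "K \<le> M"
  shows "E q K z = E q M z"
  using assms(3)
proof (induction M rule: dec_induct)
  case base then show ?case by simp
next
  case (step m)
  have "E q m z = E q (Suc m) z"
    by (rule E_step) (use assms step in auto)
  then show ?case using step by simp
qed

definition F :: "real \<Rightarrow> complex \<Rightarrow> complex" where
  "F q z = E q (nat \<lceil>2 - Re z\<rceil>) z"

lemma F_eq:
  assumes "q > 0" "Re z > 1 - real K"
  shows "F q z = E q K z"
proof -
  define K0 where "K0 = nat \<lceil>2 - Re z\<rceil>"
  have "real K0 \<ge> 2 - Re z" unfolding K0_def by linarith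
  then have K0: "Re z > 1 - real K0" by linarith
  show ?thesis
  proof (cases "K \<le> K0")
    case True then show ?thesis using E_eq_le[OF assms True] unfolding F_def K0_def by simp
  next
    case False
    then have "K0 \<le> K" by simp
    from E_eq_le[OF assms(1) K0 this] show ?thesis unfolding F_def K0_def[symmetric] by simp
  qed
qed

lemma F_holo:
  assumes "q > 0"
  shows "F q holomorphic_on UNIV"
proof -
  have "\<exists>f'. (F q has_field_derivative f') (at z)" for z
  proof -
    define K where "K = nat \<lceil>2 - Re z\<rceil>"
    define H where "H = {z. 1 - real K < Re z}"
    have "real K \<ge> 2 - Re z" unfolding K_def by linarith
    then have zH: "z \<in> H" unfolding H_def by simp
    have oH: "open H" unfolding H_def by (rule open_halfspace_Re_gt)
    have "(E q K has_field_derivative deriv (E q K) z) (at z)"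
      by (rule holomorphic_derivI[OF E_holo[OF assms, of K] oH[unfolded H_def] zH[unfolded H_def]])
    then have "(F q has_field_derivative deriv (E q K) z) (at z)"
      by (rule has_field_derivative_transform_within_open[OF _ oH zH])
         (use F_eq[OF assms] in \<open>auto simp: H_def\<close>)
    then show ?thesis by blast
  qed
  then show ?thesis by (simp add: holomorphic_on_open)
qed

lemma F_series:
  fixes w :: complex
  assumes "q > 0" "0 < Re w"
  shows "F q w = (\<Sum>n. (-1) ^ n * (complex_of_real (real n + q)) powr (- w))"
proof -
  have "F q w = E q 1 w" using F_eq[OF assms(1), where z=w and K=1] assms by simp
  also have "\<dots> = (\<Sum>n. (-1) ^ n * pw w (real n + q))"
    using series_E1[OF assms] by (simp add: sums_iff)
  finally show ?thesis by (simp add: pw_def)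
qed

lemma zetaE_F:
  assumes "q > 0"
  shows "(\<lambda>z. zetaE z q) = F q"
proof -
  let ?P = "\<lambda>f. f holomorphic_on UNIV \<and>
      (\<forall>w. 0 < Re w \<longrightarrow> f w = (\<Sum>n. (-1) ^ n * (complex_of_real (real n + q)) powr (- w)))"
  have PF: "?P (F q)" using F_holo[OF assms] F_series[OF assms] by auto
  have uniq: "g = F q" if "?P g" for g
  proof
    fix z
    show "g z = F q z"
    proof (rule analytic_continuation_open[where f=g and g="F q" and s="{w. 0 < Re w}" and s'=UNIV])
      show "open {w. 0 < Re w}" using open_halfspace_Re_gt[of 0] by simp
      show "{w. 0 < Re w} \<noteq> {}" by (auto intro!: exI[of _ 1])
    qed (use that PF in auto)
  qed
  have "(THE f. ?P f) = F q"
    by (rule the_equality[where P="?P" and a="F q", OF PF uniq])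
  then show ?thesis unfolding zetaE_def by (auto simp: fun_eq_iff)
qed



definition P :: "real \<Rightarrow> nat \<Rightarrow> complex \<Rightarrow> complex" where
  "P q N z = (\<Sum>n<N. (-1)^n * pw z (real n + q))"

lemma P_split:
  "P q N z = pw z q / 2 + (\<Sum>n<N. (-1)^n * fd 1 (pw z) (real n + q)) / 2 - (-1)^N * pw z (real N + q) / 2"
proof -
  have d: "pw z (real n + q) - pw z (real (Suc n) + q) = fd 1 (pw z) (real n + q)" for n
    using fd_pw_diff[of 0 z n q] by simp
  show ?thesis
    using onestep_fin[of "\<lambda>n. pw z (real n + q)" N] unfolding d P_def by (simp only: of_nat_0 add_0_left)
qed

lemma P_unif:
  assumes q: "q > 0"
  shows "uniform_limit (ball 1 (1/2)) (P q) (F q) sequentially"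
proof -
  define A where "A = ball (1::complex) (1/2)"
  have zA: "norm z \<le> 3/2 \<and> Re z \<ge> 1/2" if "z \<in> A" for z
  proof -
    have "norm (1 - z) < 1/2" using that by (simp add: A_def dist_norm)
    moreover have "norm z \<le> norm (1::complex) + norm (z - 1)" by (rule norm_triangle_sub)
    moreover have "Re (1 - z) \<le> norm (1 - z)" by (rule complex_Re_le_cmod)
    moreover have "norm (z - 1) = norm (1 - z)" by (rule norm_minus_commute)
    ultimately show ?thesis by simp
  qed
  define M where "M n = 3/2 * (real n + q) powr (- 3/2)" for n
  have W: "uniform_limit A (\<lambda>N z. \<Sum>n<N. (-1)^n * fd 1 (pw z) (real n + q))
             (\<lambda>z. \<Sum>n. (-1)^n * fd 1 (pw z) (real n + q)) sequentially"
  proof (rule Weierstrass_m_test_ev)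
    show "summable M" unfolding M_def using pq_summable[of "3/2" q] q by (intro summable_mult) auto
    show "\<forall>\<^sub>F n in sequentially. \<forall>z\<in>A. norm ((-1)^n * fd 1 (pw z) (real n + q)) \<le> M n"
      using eventually_gt_at_top[of "0::nat"]
    proof eventually_elim
      case (elim n)
      show ?case
      proof
        fix z assume "z \<in> A"
        note zz = zA[OF this]
        have "norm ((-1)^n * fd 1 (pw z) (real n + q)) = norm (fd 1 (pw z) (real n + q))"
          by (simp add: norm_mult norm_power)
        also have "\<dots> \<le> (\<Prod>i<1. (norm z + real i)) * (real n + q) powr (- Re z - real 1)"
          by (rule pw_fd_bound) (use q zz in auto)
        also have "\<dots> = norm z * (real n + q) powr (- Re z - 1)" by simp
        also have "\<dots> \<le> M n" unfolding M_def
        proof (rule mult_mono)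
          show "(real n + q) powr (- Re z - 1) \<le> (real n + q) powr (- 3 / 2)"
            by (rule powr_mono) (use zz elim q in auto)
        qed (use zz in auto)
        finally show "norm ((-1)^n * fd 1 (pw z) (real n + q)) \<le> M n" .
      qed
    qed
  qed
  have U2: "uniform_limit A (\<lambda>N z. (\<Sum>n<N. (-1)^n * fd 1 (pw z) (real n + q)) / 2)
             (\<lambda>z. (\<Sum>n. (-1)^n * fd 1 (pw z) (real n + q)) / 2) sequentially"
    by (rule bounded_linear.uniform_limit[OF bounded_linear_divide W])
  have U1: "uniform_limit A (\<lambda>N z. pw z q / 2) (\<lambda>z. pw z q / 2) sequentially"
    by (rule uniform_limit_const)
  have U3: "uniform_limit A (\<lambda>N z. (-1)^N * pw z (real N + q) / 2) (\<lambda>z. 0) sequentially"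
  proof (rule uniform_limitI)
    fix e :: real assume e: "e > 0"
    have "(\<lambda>N. (real N + q) powr (- (1/2))) \<longlonglongrightarrow> 0" by (rule pq_tendsto) simp
    then have "\<forall>\<^sub>F N in sequentially. (real N + q) powr (- (1/2)) < e"
      using e by (auto dest: order_tendstoD(2))
    then show "\<forall>\<^sub>F N in sequentially. \<forall>z\<in>A. dist ((-1)^N * pw z (real N + q) / 2) 0 < e"
      using eventually_gt_at_top[of "0::nat"]
    proof eventually_elim
      case (elim N)
      show ?case
      proof
        fix z assume "z \<in> A"
        note zz = zA[OF this]
        have "dist ((-1)^N * pw z (real N + q) / 2) 0 = (real N + q) powr (- Re z) / 2"
          using q by (simp add: pw_def norm_mult norm_power norm_divide norm_powr_real_powr)
        also have "\<dots> \<le> (real N + q) powr (- (1/2)) / 2"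
          by (intro divide_right_mono powr_mono) (use zz elim q in auto)
        also have "\<dots> < e" using elim e by simp
        finally show "dist ((-1)^N * pw z (real N + q) / 2) 0 < e" .
      qed
    qed
  qed
  have U: "uniform_limit A (\<lambda>N z. pw z q / 2 + (\<Sum>n<N. (-1)^n * fd 1 (pw z) (real n + q)) / 2 - (-1)^N * pw z (real N + q) / 2)
             (\<lambda>z. pw z q / 2 + (\<Sum>n. (-1)^n * fd 1 (pw z) (real n + q)) / 2 - 0) sequentially"
    by (rule uniform_limit_minus[OF uniform_limit_add[OF U1 U2] U3])
  have "uniform_limit A (P q) (F q) sequentially"
  proof (rule iffD1[OF uniform_limit_cong' U])
    show "pw z q / 2 + (\<Sum>n<N. (-1)^n * fd 1 (pw z) (real n + q)) / 2 - (-1)^N * pw z (real N + q) / 2 = P q N z" for N z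
      by (rule P_split[symmetric])
    show "pw z q / 2 + (\<Sum>n. (-1)^n * fd 1 (pw z) (real n + q)) / 2 - 0 = F q z" if "z \<in> A" for z
    proof -
      have "F q z = E q 1 z" using F_eq[OF q, where z=z and K=1] zA[OF that] by simp
      then show ?thesis unfolding E_def by simp
    qed
  qed
  then show ?thesis unfolding A_def .
qed

lemma hd_exp:
  fixes c L :: "nat \<Rightarrow> complex"
  shows "(deriv ^^ l) (\<lambda>z. \<Sum>n<N. c n * exp (- z * L n)) = (\<lambda>z. \<Sum>n<N. c n * (- L n)^l * exp (- z * L n))"
proof (induction l)
  case 0 then show ?case by simp
next
  case (Suc l)
  have dz: "deriv (\<lambda>z. \<Sum>n<N. c n * (- L n)^l * exp (- z * L n)) z = (\<Sum>n<N. c n * (- L n)^Suc l * exp (- z * L n))" for z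
  proof (rule DERIV_imp_deriv)
    show "((\<lambda>z. \<Sum>n<N. c n * (- L n)^l * exp (- z * L n)) has_field_derivative (\<Sum>n<N. c n * (- L n)^Suc l * exp (- z * L n))) (at z)"
      by (auto intro!: derivative_eq_intros sum.cong simp: algebra_simps)
  qed
  have "(deriv ^^ Suc l) (\<lambda>z. \<Sum>n<N. c n * exp (- z * L n)) = deriv ((deriv ^^ l) (\<lambda>z. \<Sum>n<N. c n * exp (- z * L n)))"
    by simp
  also have "\<dots> = deriv (\<lambda>z. \<Sum>n<N. c n * (- L n)^l * exp (- z * L n))"
    by (simp only: Suc.IH)
  also have "\<dots> = (\<lambda>z. \<Sum>n<N. c n * (- L n)^Suc l * exp (- z * L n))"
    by (rule ext, rule dz)
  finally show ?case .
qed

lemma P_exp: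
  assumes q: "q > 0"
  shows "P q N = (\<lambda>z. \<Sum>n<N. (-1)^n * exp (- z * of_real (ln (real n + q))))"
proof
  fix z
  have "pw z (real n + q) = exp (- z * of_real (ln (real n + q)))" for n
  proof -
    have pos: "real n + q > 0" using q by simp
    then have "complex_of_real (real n + q) \<noteq> 0" by (metis of_real_eq_0_iff less_irrefl)
    then show ?thesis unfolding pw_def powr_def using Ln_of_real[OF pos] by simp
  qed
  then show "P q N z = (\<Sum>n<N. (-1)^n * exp (- z * of_real (ln (real n + q))))"
    unfolding P_def by simp
qed

lemma P_hd:
  assumes q: "q > 0"
  shows "(deriv ^^ l) (P q N) 1 = (-1)^l * complex_of_real (\<Sum>n<N. (-1) ^ n * ln (real n + q) ^ l / (real n + q))"
proof -
  have "(deriv ^^ l) (P q N) 1 = (\<Sum>n<N. (-1)^n * (- of_real (ln (real n + q)))^l * exp (- 1 * of_real (ln (real n + q))))"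
    unfolding P_exp[OF q] hd_exp by simp
  also have "\<dots> = (\<Sum>n<N. (-1)^l * of_real ((-1) ^ n * ln (real n + q) ^ l / (real n + q)))"
  proof (rule sum.cong)
    fix n assume "n \<in> {..<N}"
    have pos: "real n + q > 0" using q by simp
    have "exp (- complex_of_real (ln (real n + q))) = of_real (exp (- ln (real n + q)))"
      by (simp add: exp_of_real[symmetric])
    also have "\<dots> = of_real (inverse (real n + q))" using pos by (simp add: exp_minus)
    finally have ex: "exp (- complex_of_real (ln (real n + q))) = of_real (inverse (real n + q))" .
    show "(-1)^n * (- complex_of_real (ln (real n + q)))^l * exp (- 1 * complex_of_real (ln (real n + q))) =
          (-1)^l * complex_of_real ((-1) ^ n * ln (real n + q) ^ l / (real n + q))"
      apply (simp only: mult_minus1 ex)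
      apply (simp add: power_minus' power_mult_distrib divide_inverse mult_ac)
      done
  qed simp
  also have "\<dots> = (-1)^l * complex_of_real (\<Sum>n<N. (-1) ^ n * ln (real n + q) ^ l / (real n + q))"
    by (simp add: sum_distrib_left)
  finally show ?thesis .
qed

theorem corollary3p8:
  fixes q :: real and l :: nat
  assumes "0 < q"
  shows "(\<lambda>N. complex_of_real (\<Sum>n\<le>N. (-1) ^ n * ln (real n + q) ^ l / (real n + q)))
           \<longlonglongrightarrow> tilde_gamma l q"
proof -
  have lim: "(\<lambda>N. (deriv ^^ l) (P q N) 1) \<longlonglongrightarrow> (deriv ^^ l) (F q) 1"
  proof (rule higher_deriv_complex_uniform_limit[OF P_unif[OF assms]])
    show "\<forall>\<^sub>F N in sequentially. P q N holomorphic_on ball 1 (1/2)"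
      unfolding P_def by (intro always_eventually allI holomorphic_intros pw_holo)
  qed auto
  have "(\<lambda>N. (-1)^l * (deriv ^^ l) (P q N) 1) \<longlonglongrightarrow> (-1)^l * (deriv ^^ l) (F q) 1"
    by (intro tendsto_mult_left lim)
  moreover have "(-1)^l * (deriv ^^ l) (F q) 1 = tilde_gamma l q"
    unfolding tilde_gamma_def zetaE_F[OF assms] ..
  moreover have "(-1)^l * (deriv ^^ l) (P q N) 1 = complex_of_real (\<Sum>n<N. (-1) ^ n * ln (real n + q) ^ l / (real n + q))" for N
    unfolding P_hd[OF assms] by (simp flip: power_add add: power_add[symmetric] mult_2[symmetric])
  ultimately have "(\<lambda>N. complex_of_real (\<Sum>n<N. (-1) ^ n * ln (real n + q) ^ l / (real n + q))) \<longlonglongrightarrow> tilde_gamma l q"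
    by simp
  then have "(\<lambda>N. complex_of_real (\<Sum>n<Suc N. (-1) ^ n * ln (real n + q) ^ l / (real n + q))) \<longlonglongrightarrow> tilde_gamma l q"
    by (rule LIMSEQ_Suc)
  then show ?thesis by (simp add: lessThan_Suc_atMost)
qed

end
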